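(* Let $n\ge 2$ and let $\mathbf{A}\subset\mathbb{R}^{n\times n}$ be a connected set of real matrices. For $A\in\mathbf{A}$ write its characteristic polynomial as $f_A(s)=\det(sI_n-A)=s^n+a_{n-1}s^{n-1}+\cdots+a_1s+a_0$, and let $\Delta_{n-1}$ denote the $(n-1)$-th leading principal minor of the Hurwitz matrix $\Delta_A$ of $f_A$ (all these quantities depend on $A$). Suppose that at least one $A\in\mathbf{A}$ is Hurwitz stable. Then every $A\in\mathbf{A}$ is Hurwitz stable if and only if $a_0>0$ and $\Delta_{n-1}>0$ for all $A\in\mathbf{A}$.
   Context: A real square matrix is Hurwitz stable if all its eigenvalues lie in the open left half of the complex plane. The Hurwitz matrix of $f_A(s)=s^n+a_{n-1}s^{n-1}+\cdots+a_0$ is the $n\times n$ matrix $\Delta_A=(h_{ij})$ with $h_{ij}=a_{n-2j+i}$, where one sets $a_n=1$ and $a_k=0$ for $k<0$ or $k>n$; explicitly its rows are $(a_{n-1},a_{n-3},a_{n-5},\dots)$, $(1,a_{n-2},a_{n-4},\dots)$, $(0,a_{n-1},a_{n-3},\dots)$, $(0,1,a_{n-2},\dots)$, and so on. Its successive leading principal minors are denoted $\Delta_1,\dots,\Delta_n$. *)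

theory Defs
  imports "HOL-Analysis.Analysis" "HOL-Computational_Algebra.Polynomial"
begin

definition charpoly :: "real^'n^'n \<Rightarrow> real poly" where
  "charpoly A = det (\<chi> i j. (if i = j then [:0, 1:] else 0) - [:A $ i $ j:])"

definition hurwitz_stable :: "real^'n^'n \<Rightarrow> bool" where
  "hurwitz_stable A \<longleftrightarrow>
     (\<forall>(z::complex) (v::complex^'n). v \<noteq> 0 \<and>
        (\<chi> i j. complex_of_real (A $ i $ j)) *v v = z *s v \<longrightarrow> Re z < 0)"

definition hcoef :: "nat \<Rightarrow> real poly \<Rightarrow> int \<Rightarrow> real" where
  "hcoef n p k = (if k = int n then 1 else if k < 0 \<or> k > int n then 0 else coeff p (nat k))"

text \<open>Entry h_ij = a_{n-2j+i} of the Hurwitz matrix (1-based indices i, j).\<close>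
definition hurwitz_entry :: "nat \<Rightarrow> real poly \<Rightarrow> nat \<Rightarrow> nat \<Rightarrow> real" where
  "hurwitz_entry n p i j = hcoef n p (int n - 2 * int j + int i)"

definition hurwitz_minor :: "nat \<Rightarrow> real poly \<Rightarrow> nat \<Rightarrow> real" where
  "hurwitz_minor n p m =
     (\<Sum>\<sigma> | \<sigma> permutes {1..m}. of_int (sign \<sigma>) * (\<Prod>i\<in>{1..m}. hurwitz_entry n p i (\<sigma> i)))"

end

theory Submission
  imports Defs "Jordan_Normal_Form.Determinant" "HOL-Computational_Algebra.Polynomial_Factorial"
    "HOL-Computational_Algebra.Field_as_Ring" "HOL-Computational_Algebra.Fundamental_Theorem_Algebra"
begin

lemma leibniz_shift:
  fixes E :: "nat \<Rightarrow> nat \<Rightarrow> 'a::comm_ring_1"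
  shows "(\<Sum>\<sigma> | \<sigma> permutes {1..m}. of_int (sign \<sigma>) * (\<Prod>i\<in>{1..m}. E i (\<sigma> i)))
       = (\<Sum>q | q permutes {0..<m}. of_int (sign q) * (\<Prod>i\<in>{0..<m}. E (Suc i) (Suc (q i))))"
proof -
  have bS: "bij_betw Suc {0..<m} {1..m}"
    by (simp add: bij_betw_def inj_on_def) (metis atLeastLessThanSuc_atLeastAtMost image_Suc_atLeastLessThan)
  have bP: "bij_betw (\<lambda>i. i - 1) {1..m} {0..<m}"
    unfolding bij_betw_def inj_on_def by (auto simp: image_def intro!: bexI[of _ "Suc _"])
  show ?thesis
  proof (rule sum.reindex_bij_witness[where i="map_permutation {0..<m} Suc" and j="map_permutation {1..m} (\<lambda>i. i - 1)"])
    fix a assume a: "a \<in> {\<sigma>. \<sigma> permutes {1..m}}"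
    hence ap: "a permutes {1..m}" by simp
    have "map_permutation {0..<m} Suc (map_permutation {1..m} (\<lambda>i. i - 1) a)
        = map_permutation {1..m} (Suc \<circ> (\<lambda>i. i - 1)) a"
      by (rule map_permutation_compose[OF bP]) simp
    also have "\<dots> = map_permutation {1..m} id a"
      by (rule map_permutation_cong[OF _ ap]) (auto simp: inj_on_def)
    also have "\<dots> = a" using ap by simp
    finally show "map_permutation {0..<m} Suc (map_permutation {1..m} (\<lambda>i. i - 1) a) = a" .
    show "map_permutation {1..m} (\<lambda>i. i - 1) a \<in> {q. q permutes {0..<m}}"
      using map_permutation_permutes[OF bP ap] by simp
    have sg: "sign (map_permutation {1..m} (\<lambda>i. i - 1) a) = sign a"
      by (rule sign_map_permutation[OF bij_betw_imp_inj_on[OF bP] ap]) simp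
    have pr: "(\<Prod>i\<in>{0..<m}. E (Suc i) (Suc (map_permutation {1..m} (\<lambda>i. i - 1) a i)))
          = (\<Prod>i\<in>{1..m}. E i (a i))"
    proof (rule prod.reindex_bij_witness[where i="\<lambda>i. i - 1" and j=Suc])
      fix i assume i: "i \<in> {0..<m}"
      hence i1: "Suc i \<in> {1..m}" by simp
      have "map_permutation {1..m} (\<lambda>i. i - 1) a (Suc i - 1) = a (Suc i) - 1"
        using map_permutation_apply[OF bij_betw_imp_inj_on[OF bP] i1] by simp
      moreover have "a (Suc i) \<in> {1..m}" by (metis ap i1 permutes_in_image)
      ultimately show "E (Suc i) (a (Suc i)) = E (Suc i) (Suc (map_permutation {1..m} (\<lambda>i. i - 1) a i))"
        by simp
    qed auto
    show "of_int (sign (map_permutation {1..m} (\<lambda>i. i - 1) a)) *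
          (\<Prod>i\<in>{0..<m}. E (Suc i) (Suc (map_permutation {1..m} (\<lambda>i. i - 1) a i))) =
          of_int (sign a) * (\<Prod>i\<in>{1..m}. E i (a i))" using sg pr by simp
  next
    fix b assume b: "b \<in> {q. q permutes {0..<m}}"
    hence bp: "b permutes {0..<m}" by simp
    have "map_permutation {1..m} (\<lambda>i. i - 1) (map_permutation {0..<m} Suc b)
        = map_permutation {0..<m} ((\<lambda>i. i - 1) \<circ> Suc) b"
      by (rule map_permutation_compose[OF bS bij_betw_imp_inj_on[OF bP]])
    also have "\<dots> = map_permutation {0..<m} id b"
      by (rule map_permutation_cong[OF _ bp]) (auto simp: inj_on_def)
    also have "\<dots> = b" using bp by simp
    finally show "map_permutation {1..m} (\<lambda>i. i - 1) (map_permutation {0..<m} Suc b) = b" .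
    show "map_permutation {0..<m} Suc b \<in> {\<sigma>. \<sigma> permutes {1..m}}"
      using map_permutation_permutes[OF bS bp] by simp
  qed
qed

definition HM :: "nat \<Rightarrow> real poly \<Rightarrow> nat \<Rightarrow> real mat" where
  "HM n p m = Matrix.mat m m (\<lambda>(i,j). hurwitz_entry n p (Suc i) (Suc j))"

lemma hurwitz_minor_det: "hurwitz_minor n p m = Determinant.det (HM n p m)"
  unfolding hurwitz_minor_def HM_def leibniz_shift
  by (subst det_def'[of _ m]) auto

lemma hcoef_nonneg:
  assumes "coeff p n = 1" "degree p \<le> n" "l \<ge> 0"
  shows "hcoef n p l = coeff p (nat l)"
proof -
  have "coeff p (nat l) = 0" if "l > int n"
    using that assms(2) by (intro coeff_eq_0) linarith
  thus ?thesis using assms unfolding hcoef_def by (auto simp: not_less)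
qed

lemma hcoef_neg: "l < 0 \<Longrightarrow> hcoef n p l = 0"
  unfolding hcoef_def by auto

lemma hurwitz_core:
  assumes p: "coeff p n = 1" "degree p \<le> n" and j: "j < n - 1" and n: "n \<ge> 2"
  shows "coeff (p * (\<Sum>i<n-1. monom (c i) (n - 2 - i))) (2*n - 3 - 2*j)
       = (\<Sum>i<n-1. c i * hurwitz_entry n p (Suc i) (Suc j))"
proof -
  have "coeff (p * (\<Sum>i<n-1. monom (c i) (n - 2 - i))) (2*n - 3 - 2*j)
      = (\<Sum>i<n-1. coeff (monom (c i) (n - 2 - i) * p) (2*n - 3 - 2*j))"
    by (simp add: mult.commute[of p] sum_distrib_right coeff_sum)
  also have "\<dots> = (\<Sum>i<n-1. c i * hurwitz_entry n p (Suc i) (Suc j))"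
  proof (rule sum.cong[OF refl])
    fix i assume i0: "i \<in> {..<n-1}"
    hence i: "i < n - 1" by simp
    have e1: "int (2*n - 3 - 2*j) = 2*int n - 3 - 2*int j" using j n by linarith
    have e2: "int (n - 2 - i) = int n - 2 - int i" using i n by linarith
    show "coeff (monom (c i) (n - 2 - i) * p) (2*n - 3 - 2*j) = c i * hurwitz_entry n p (Suc i) (Suc j)"
    proof (cases "2*n - 3 - 2*j < n - 2 - i")
      case True
      hence "int (2*n - 3 - 2*j) < int (n - 2 - i)" by linarith
      hence "int n - 2 * int (Suc j) + int (Suc i) < 0" unfolding e1 e2 by simp
      thus ?thesis using True by (simp add: coeff_monom_mult hurwitz_entry_def hcoef_neg)
    next
      case False
      hence "int (2*n - 3 - 2*j) \<ge> int (n - 2 - i)" by linarith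
      hence ge: "int n - 2 * int (Suc j) + int (Suc i) \<ge> 0" unfolding e1 e2 by simp
      have "int (2*n - 3 - 2*j - (n - 2 - i)) = int (2*n - 3 - 2*j) - int (n - 2 - i)"
        using False by linarith
      hence eq: "nat (int n - 2 * int (Suc j) + int (Suc i)) = 2*n - 3 - 2*j - (n - 2 - i)"
        unfolding e1 e2 by simp
      have "hurwitz_entry n p (Suc i) (Suc j) = coeff p (2*n - 3 - 2*j - (n - 2 - i))"
        unfolding hurwitz_entry_def hcoef_nonneg[OF p ge] eq ..
      thus ?thesis using False by (simp add: coeff_monom_mult)
    qed
  qed
  finally show ?thesis .
qed

lemma HM_carrier: "HM n p m \<in> carrier_mat m m"
  unfolding HM_def by simp

lemma HM_transpose_mult:
  assumes v: "v \<in> carrier_vec m" and j: "j < m"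
  shows "(transpose_mat (HM n p m) *\<^sub>v v) $ j = (\<Sum>i<m. v $ i * hurwitz_entry n p (Suc i) (Suc j))"
  using v j unfolding HM_def
  by (auto simp: scalar_prod_def mult.commute lessThan_atLeast0 intro!: sum.cong)

definition Wv :: "nat \<Rightarrow> (nat \<Rightarrow> real) \<Rightarrow> real poly" where
  "Wv n c = (\<Sum>i<n-1. monom (c i) (n - 2 - i))"

lemma coeff_Wv: assumes "n \<ge> 2"
  shows "coeff (Wv n c) k = (if k \<le> n - 2 then c (n - 2 - k) else 0)"
proof -
  have "coeff (Wv n c) k = (\<Sum>i<n-1. if i = n - 2 - k \<and> k \<le> n - 2 then c i else 0)"
    unfolding Wv_def coeff_sum coeff_monom
    by (rule sum.cong[OF refl]) auto
  also have "\<dots> = (if k \<le> n - 2 then c (n - 2 - k) else 0)"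
    using assms by (cases "k \<le> n - 2") (auto simp: sum.delta')
  finally show ?thesis .
qed

lemma degree_Wv: assumes "n \<ge> 2" shows "degree (Wv n c) \<le> n - 2"
  by (rule degree_le) (auto simp: coeff_Wv[OF assms])

lemma hurwitz_zero_iff:
  assumes p: "coeff p n = 1" "degree p \<le> n" and n: "n \<ge> 2"
  shows "hurwitz_minor n p (n-1) = 0 \<longleftrightarrow>
    (\<exists>W. W \<noteq> 0 \<and> degree W \<le> n - 2 \<and> (\<forall>k. odd k \<longrightarrow> coeff (p*W) k = 0))"
proof -
  let ?m = "n - 1"
  let ?M = "HM n p ?m"
  have "hurwitz_minor n p ?m = Determinant.det (transpose_mat ?M)"
    unfolding hurwitz_minor_det by (rule det_transpose[symmetric, OF HM_carrier])
  hence eq: "hurwitz_minor n p ?m = 0 \<longleftrightarrow>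
      (\<exists>v. v \<in> carrier_vec ?m \<and> v \<noteq> 0\<^sub>v ?m \<and> transpose_mat ?M *\<^sub>v v = 0\<^sub>v ?m)"
    using det_0_iff_vec_prod_zero_field[of "transpose_mat ?M" ?m] HM_carrier[of n p ?m] by simp
  have key: "(transpose_mat ?M *\<^sub>v v) $ j = coeff (p * Wv n (\<lambda>i. v $ i)) (2*n - 3 - 2*j)"
    if "v \<in> carrier_vec ?m" "j < ?m" for v j
    unfolding HM_transpose_mult[OF that] Wv_def hurwitz_core[OF p that(2) n] ..
  show ?thesis unfolding eq
  proof
    assume "\<exists>v. v \<in> carrier_vec ?m \<and> v \<noteq> 0\<^sub>v ?m \<and> transpose_mat ?M *\<^sub>v v = 0\<^sub>v ?m"
    then obtain v where v: "v \<in> carrier_vec ?m" "v \<noteq> 0\<^sub>v ?m" "transpose_mat ?M *\<^sub>v v = 0\<^sub>v ?m"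
      by blast
    define W where "W = Wv n (\<lambda>i. v $ i)"
    obtain i where i: "i < ?m" "v $ i \<noteq> 0" using v(1,2) by (auto simp: vec_eq_iff)
    have ar: "n - 2 - (n - 2 - i) = i" using i by linarith
    have le: "n - 2 - i \<le> n - 2" by simp
    have "coeff W (n - 2 - i) = v $ (n - 2 - (n - 2 - i))" unfolding W_def coeff_Wv[OF n]
      by (rule if_P[OF le])
    hence "coeff W (n - 2 - i) = v $ i" unfolding ar .
    hence W0: "W \<noteq> 0" using i by auto
    have dW: "degree W \<le> n - 2" unfolding W_def by (rule degree_Wv[OF n])
    have "coeff (p*W) k = 0" if k: "odd k" for k
    proof (cases "k \<le> 2*n - 3")
      case True
      define j where "j = (2*n - 3 - k) div 2"
      have j: "j < ?m" "2*n - 3 - 2*j = k" using True k n unfolding j_def by (auto elim!: oddE)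
      have "(transpose_mat ?M *\<^sub>v v) $ j = 0" using v(3) j by simp
      thus ?thesis using key[OF v(1) j(1)] j(2) W_def by simp
    next
      case False
      have "degree (p * W) \<le> n + (n - 2)"
        using degree_mult_le[of p W] p(2) dW by linarith
      moreover obtain r where "k = 2*r + 1" using k by (auto elim!: oddE)
      ultimately show ?thesis using False n by (intro coeff_eq_0) presburger
    qed
    thus "\<exists>W. W \<noteq> 0 \<and> degree W \<le> n - 2 \<and> (\<forall>k. odd k \<longrightarrow> coeff (p*W) k = 0)"
      using W0 dW by blast
  next
    assume "\<exists>W. W \<noteq> 0 \<and> degree W \<le> n - 2 \<and> (\<forall>k. odd k \<longrightarrow> coeff (p*W) k = 0)"
    then obtain W where W: "W \<noteq> 0" "degree W \<le> n - 2" "\<forall>k. odd k \<longrightarrow> coeff (p*W) k = 0"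
      by blast
    define v where "v = vec ?m (\<lambda>i. coeff W (n - 2 - i))"
    have vc: "v \<in> carrier_vec ?m" unfolding v_def by simp
    have WW: "Wv n (\<lambda>i. v $ i) = W"
    proof (rule poly_eqI)
      fix k
      show "coeff (Wv n (\<lambda>i. v $ i)) k = coeff W k"
      proof (cases "k \<le> n - 2")
        case True
        have ar: "n - 2 - (n - 2 - k) = k" using True by linarith
        have "n - 2 - k < n - 1" using n by linarith
        thus ?thesis unfolding coeff_Wv[OF n] v_def using True ar by simp
      next
        case False
        hence "coeff W k = 0" using W(2) by (intro coeff_eq_0) linarith
        thus ?thesis unfolding coeff_Wv[OF n] using False by simp
      qed
    qed
    have v0: "v \<noteq> 0\<^sub>v ?m"
    proof
      assume v0: "v = 0\<^sub>v ?m"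
      have ar: "n - 2 - (n - 2 - degree W) = degree W" using W(2) by linarith
      have "coeff W (degree W) = v $ (n - 2 - degree W)" unfolding v_def using W(2) n ar
        by (subst index_vec) auto
      also have "\<dots> = 0" using v0 W(2) n by simp
      finally show False using W(1) by simp
    qed
    have "transpose_mat ?M *\<^sub>v v = 0\<^sub>v ?m"
    proof (rule eq_vecI)
      fix j assume "j < dim_vec (0\<^sub>v ?m :: real vec)"
      hence j: "j < ?m" by simp
      have "2*n - 3 - 2*j = 2*(n - 2 - j) + 1" using j n by linarith
      hence "odd (2*n - 3 - 2*j)" by simp
      thus "(transpose_mat ?M *\<^sub>v v) $ j = 0\<^sub>v ?m $ j"
        using key[OF vc j] WW W(3) j by simp
    qed (simp add: HM_def)
    thus "\<exists>v. v \<in> carrier_vec ?m \<and> v \<noteq> 0\<^sub>v ?m \<and> transpose_mat ?M *\<^sub>v v = 0\<^sub>v ?m"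
      using vc v0 by blast
  qed
qed

lemma coeff_neg_comp: "coeff (pcompose p [:0, -1:]) k = (-1)^k * coeff (p :: 'a :: comm_ring_1 poly) k"
  using coeff_pcompose_linear[of p "-1" k] by simp

lemma self_add_zero: "(c::'a::field_char_0) + c = 0 \<Longrightarrow> c = 0"
  by (metis add_cancel_right_left mult_2 mult_eq_0_iff zero_neq_numeral)

lemma even_poly_iff:
  fixes E :: "'a :: field_char_0 poly"
  shows "pcompose E [:0, -1:] = E \<longleftrightarrow> (\<forall>k. odd k \<longrightarrow> coeff E k = 0)"
proof
  assume h: "pcompose E [:0, -1:] = E"
  show "\<forall>k. odd k \<longrightarrow> coeff E k = 0"
  proof (intro allI impI)
    fix k :: nat assume k: "odd k"
    have "coeff E k = (-1)^k * coeff E k" using arg_cong[OF h, of "\<lambda>p. coeff p k"]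
      unfolding coeff_neg_comp by simp
    also have "(-1)^k = (-1 :: 'a)" using k by simp
    finally have "coeff E k + coeff E k = 0" by simp
    thus "coeff E k = 0" by (rule self_add_zero)
  qed
next
  assume h: "\<forall>k. odd k \<longrightarrow> coeff E k = 0"
  show "pcompose E [:0, -1:] = E"
  proof (rule poly_eqI)
    fix k
    show "coeff (pcompose E [:0, -1:]) k = coeff E k"
    proof (cases "even k")
      case True
      hence "(-1)^k = (1 :: 'a)" by simp
      thus ?thesis unfolding coeff_neg_comp by simp
    next
      case False
      thus ?thesis unfolding coeff_neg_comp using h by simp
    qed
  qed
qed

lemma map_of_real_mult:
  "map_poly complex_of_real (p * q) = map_poly complex_of_real p * map_poly complex_of_real q"
  by (rule poly_eqI) (simp add: coeff_map_poly coeff_mult)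

lemma map_of_real_add:
  "map_poly complex_of_real (p + q) = map_poly complex_of_real p + map_poly complex_of_real q"
  by (rule poly_eqI) (simp add: coeff_map_poly)

lemma poly_map_of_real: "poly (map_poly complex_of_real p) (complex_of_real x) = complex_of_real (poly p x)"
  by (induct p) (auto simp: map_poly_pCons)

lemma hurwitz_zero_if_imag_root:
  assumes p: "coeff p n = 1" "degree p \<le> n" and n: "n \<ge> 2" and w: "w \<noteq> 0"
    and root: "poly (map_poly complex_of_real p) (\<i> * complex_of_real w) = 0"
  shows "hurwitz_minor n p (n-1) = 0"
proof -
  define q :: "real poly" where "q = [:w^2, 0, 1:]"
  have q0: "q \<noteq> 0" unfolding q_def by simp
  have dq: "degree q = 2" unfolding q_def by simp
  define d where "d = p div q"
  define r where "r = p mod q"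
  have pdr: "p = d * q + r" unfolding d_def r_def by simp
  have dr: "degree r < 2" using degree_mod_less[OF q0, of p] dq unfolding r_def
    by (cases "p mod q = 0") auto
  have r_eq: "r = [:coeff r 0, coeff r 1:]"
  proof (rule poly_eqI)
    fix k show "coeff r k = coeff [:coeff r 0, coeff r 1:] k"
      using dr by (cases k) (auto simp: coeff_pCons coeff_eq_0 split: nat.splits)
  qed
  let ?z = "\<i> * complex_of_real w"
  have qz: "poly (map_poly complex_of_real q) ?z = 0"
    unfolding q_def by (simp add: map_poly_pCons power2_eq_square algebra_simps)
  have "poly (map_poly complex_of_real p) ?z =
        poly (map_poly complex_of_real d) ?z * poly (map_poly complex_of_real q) ?z
        + poly (map_poly complex_of_real r) ?z"
    by (subst pdr) (simp add: map_of_real_mult map_of_real_add)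
  hence "poly (map_poly complex_of_real r) ?z = 0" using root qz by simp
  hence "complex_of_real (coeff r 0) + ?z * complex_of_real (coeff r 1) = 0"
    by (subst (asm) r_eq) (simp add: map_poly_pCons)
  hence "coeff r 0 = 0 \<and> w * coeff r 1 = 0"
    by (simp add: complex_eq_iff)
  hence "r = 0" using w by (subst r_eq) simp
  hence pdq: "p = q * d" using pdr by (simp add: mult.commute)
  have p0: "p \<noteq> 0" using p(1) by auto
  hence d0: "d \<noteq> 0" using pdq by auto
  have "degree p = degree d + 2" using pdq q0 d0 dq by (simp add: degree_mult_eq)
  hence dd: "degree d \<le> n - 2" using p(2) by linarith
  define W where "W = pcompose d [:0, -1:]"
  have W0: "W \<noteq> 0" unfolding W_def using d0 pcompose_eq_0[of d "[:0,-1:]"] by auto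
  have dW: "degree W \<le> n - 2" unfolding W_def degree_pcompose using dd by simp
  have qq: "pcompose q [:0, -1:] = q" unfolding q_def by (simp add: pcompose_pCons)
  have mm: "pcompose [:0, -1:] [:0, -1::real:] = [:0, 1:]" by (simp add: pcompose_pCons)
  have "pcompose (p * W) [:0, -1:] = q * (pcompose d [:0, -1:] * pcompose W [:0, -1:])"
    unfolding pdq pcompose_mult qq by (simp add: mult.assoc)
  also have "pcompose W [:0, -1:] = d" unfolding W_def pcompose_assoc[symmetric] mm by simp
  also have "q * (pcompose d [:0, -1:] * d) = p * W" unfolding pdq W_def by (simp add: mult_ac)
  finally have "\<forall>k. odd k \<longrightarrow> coeff (p*W) k = 0" using even_poly_iff by blast
  thus ?thesis using hurwitz_zero_iff[OF p n] W0 dW by blast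
qed

lemma hurwitz_zero_imp_pair:
  assumes p: "coeff p n = 1" "degree p \<le> n" and n: "n \<ge> 2"
    and H: "hurwitz_minor n p (n-1) = 0"
  shows "\<exists>z. poly (map_poly complex_of_real p) z = 0 \<and> poly (map_poly complex_of_real p) (-z) = 0"
proof (rule ccontr)
  assume nz: "\<not> ?thesis"
  obtain W where W: "W \<noteq> 0" "degree W \<le> n - 2" "\<forall>k. odd k \<longrightarrow> coeff (p*W) k = 0"
    using hurwitz_zero_iff[OF p n] H by blast
  define P where "P = map_poly complex_of_real p"
  define V where "V = map_poly complex_of_real W"
  define P' where "P' = pcompose P [:0, -1:]"
  define V' where "V' = pcompose V [:0, -1:]"
  have "\<forall>k. odd k \<longrightarrow> coeff (P*V) k = 0"
    using W(3) unfolding P_def V_def map_of_real_mult[symmetric] by (simp add: coeff_map_poly)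
  hence "pcompose (P*V) [:0,-1:] = P*V" using even_poly_iff by blast
  hence PV: "P' * V' = P * V" unfolding P'_def V'_def pcompose_mult by simp
  have "coeff P n = 1" using p(1) unfolding P_def by (simp add: coeff_map_poly)
  hence P0: "P \<noteq> 0" by auto
  have dP: "degree P = n"
  proof -
    have "coeff P n \<noteq> 0" using p(1) unfolding P_def by (simp add: coeff_map_poly)
    hence "degree P \<ge> n" by (rule le_degree)
    moreover have "degree P = degree p" unfolding P_def by (rule degree_map_poly) simp
    ultimately show ?thesis using p(2) by simp
  qed
  have "V \<noteq> 0" using W(1) unfolding V_def by (simp add: map_poly_eq_0_iff)
  hence V'0: "V' \<noteq> 0" unfolding V'_def using pcompose_eq_0[of V "[:0,-1:]"] by auto
  have "degree V = degree W" unfolding V_def by (rule degree_map_poly) simp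
  hence dV': "degree V' \<le> n - 2" unfolding V'_def degree_pcompose using W(2) by simp
  have cop: "coprime P P'"
  proof -
    let ?g = "gcd P P'"
    have g0: "?g \<noteq> 0" using P0 by simp
    have "degree ?g = 0"
    proof (rule ccontr)
      assume "degree ?g \<noteq> 0"
      hence "\<not> constant (poly ?g)" by (simp add: constant_degree)
      then obtain z where z: "poly ?g z = 0" using fundamental_theorem_of_algebra by blast
      have zg: "[:-z,1:] dvd ?g" using z by (simp add: poly_eq_0_iff_dvd)
      have "[:-z,1:] dvd P" using zg gcd_dvd1 by (rule dvd_trans)
      hence "poly P z = 0" by (simp add: poly_eq_0_iff_dvd)
      moreover have "[:-z,1:] dvd P'" using zg gcd_dvd2 by (rule dvd_trans)
      hence "poly P' z = 0" by (simp add: poly_eq_0_iff_dvd)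
      hence "poly P (-z) = 0" unfolding P'_def by (simp add: poly_pcompose)
      ultimately show False using nz unfolding P_def by blast
    qed
    hence "is_unit ?g" using is_unit_iff_degree[OF g0] by blast
    thus ?thesis using is_unit_gcd by blast
  qed
  have "P dvd V' * P'" unfolding mult.commute[of V'] PV by simp
  hence "P dvd V'" using coprime_dvd_mult_left_iff[OF cop] by blast
  hence "degree P \<le> degree V'" using V'0 by (rule dvd_imp_degree_le)
  thus False using dP dV' n by linarith
qed


definition cpoly :: "real^'n^'n \<Rightarrow> complex poly" where
  "cpoly A = map_poly complex_of_real (charpoly A)"

definition cpmat :: "real^'n^'n \<Rightarrow> real poly^'n^'n" where
  "cpmat A = (\<chi> i j. (if i = j then [:0, 1:] else 0) - [:A $ i $ j:])"

lemma charpoly_cpmat: "charpoly A = Determinants.det (cpmat A)"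
  unfolding charpoly_def cpmat_def ..

lemma degree_cpmat: "degree (cpmat A $ i $ j) \<le> (if i = j then 1 else 0)"
  unfolding cpmat_def by auto

lemma degree_cpmat_term:
  fixes A :: "real^'n^'n"
  shows "degree (\<Prod>i\<in>UNIV. cpmat A $ i $ p i) \<le> card {i. p i = i}"
proof -
  have "degree (\<Prod>i\<in>UNIV. cpmat A $ i $ p i) \<le> (\<Sum>i\<in>UNIV. degree (cpmat A $ i $ p i))"
    using degree_prod_sum_le[of UNIV "\<lambda>i. cpmat A $ i $ p i"] by (simp add: o_def)
  also have "\<dots> \<le> (\<Sum>i\<in>UNIV. (if p i = i then 1 else 0))"
  proof (rule sum_mono)
    fix i show "degree (cpmat A $ i $ p i) \<le> (if p i = i then 1 else 0)"
      using degree_cpmat[of A i "p i"] by (cases "p i = i") auto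
  qed
  also have "\<dots> = card {i. p i = i}" by (simp add: sum.If_cases)
  finally show ?thesis .
qed

lemma charpoly_coeff_gt:
  fixes A :: "real^'n^'n"
  assumes "k > CARD('n)"
  shows "coeff (charpoly A) k = 0"
proof -
  have "coeff (charpoly A) k = (\<Sum>p | p permutes (UNIV::'n set).
           of_int (sign p) * coeff (\<Prod>i\<in>UNIV. cpmat A $ i $ p i) k)"
    unfolding charpoly_cpmat Determinants.det_def coeff_sum
    by (rule sum.cong) (auto simp: of_int_poly coeff_mult)
  also have "\<dots> = 0"
  proof (rule sum.neutral, intro ballI)
    fix p :: "'n \<Rightarrow> 'n"
    have "card {i. p i = i} \<le> CARD('n)" by (rule card_mono) auto
    hence "degree (\<Prod>i\<in>UNIV. cpmat A $ i $ p i) < k" using degree_cpmat_term[of A p] assms by linarith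
    thus "of_int (sign p) * coeff (\<Prod>i\<in>UNIV. cpmat A $ i $ p i) k = 0" by (simp add: coeff_eq_0)
  qed
  finally show ?thesis .
qed

lemma degree_charpoly: "degree (charpoly (A :: real^'n^'n)) \<le> CARD('n)"
  by (rule degree_le) (auto intro: charpoly_coeff_gt)

lemma charpoly_coeff_n:
  fixes A :: "real^'n^'n"
  shows "coeff (charpoly A) CARD('n) = 1"
proof -
  let ?n = "CARD('n)"
  let ?T = "\<lambda>p. of_int (sign p) * coeff (\<Prod>i\<in>UNIV. cpmat A $ i $ p i) ?n"
  have "coeff (charpoly A) ?n = (\<Sum>p | p permutes (UNIV::'n set). ?T p)"
    unfolding charpoly_cpmat Determinants.det_def coeff_sum
    by (rule sum.cong) (auto simp: of_int_poly coeff_mult)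
  also have "\<dots> = ?T id + (\<Sum>p \<in> {p. p permutes (UNIV::'n set)} - {id}. ?T p)"
    by (rule sum.remove) (auto simp: permutes_id finite_permutations)
  also have "(\<Sum>p \<in> {p. p permutes (UNIV::'n set)} - {id}. ?T p) = 0"
  proof (rule sum.neutral, intro ballI)
    fix p assume p: "p \<in> {p. p permutes (UNIV::'n set)} - {id}"
    then obtain j where j: "p j \<noteq> j" by (auto simp: fun_eq_iff)
    have "card {i. p i = i} < ?n"
      by (rule psubset_card_mono) (use j in auto)
    hence "degree (\<Prod>i\<in>UNIV. cpmat A $ i $ p i) < ?n" using degree_cpmat_term[of A p] by linarith
    thus "?T p = 0" by (simp add: coeff_eq_0)
  qed
  also have "?T id = 1"
  proof -
    have f: "cpmat A $ i $ i = [:- A $ i $ i, 1:]" for i unfolding cpmat_def by simp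
    have "(\<Prod>i\<in>UNIV. cpmat A $ i $ id i) = (\<Prod>i\<in>UNIV. [:- A $ i $ i, 1:])" by (simp add: f)
    moreover have "degree (\<Prod>i\<in>UNIV. [:- A $ i $ i, 1:]) = ?n"
      by (subst degree_prod_sum_eq) auto
    moreover have "lead_coeff (\<Prod>i\<in>UNIV. [:- A $ i $ i, 1:]) = 1"
      by (simp add: lead_coeff_prod)
    ultimately show ?thesis by simp
  qed
  finally show ?thesis by simp
qed

definition ev :: "complex \<Rightarrow> real poly \<Rightarrow> complex" where
  "ev z q = poly (map_poly complex_of_real q) z"

lemma ev_add: "ev z (p + q) = ev z p + ev z q"
  unfolding ev_def map_of_real_add by simp
lemma ev_mult: "ev z (p * q) = ev z p * ev z q"
  unfolding ev_def map_of_real_mult by simp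
lemma ev_0: "ev z 0 = 0" unfolding ev_def by simp
lemma ev_1: "ev z 1 = 1" unfolding ev_def by simp
lemma ev_sum: "ev z (\<Sum>i\<in>S. f i) = (\<Sum>i\<in>S. ev z (f i))"
  by (induct S rule: infinite_finite_induct) (auto simp: ev_0 ev_add)
lemma ev_prod: "ev z (\<Prod>i\<in>S. f i) = (\<Prod>i\<in>S. ev z (f i))"
  by (induct S rule: infinite_finite_induct) (auto simp: ev_1 ev_mult)
lemma ev_of_int: "ev z (of_int k) = of_int k"
  unfolding ev_def by (simp add: of_int_poly map_poly_pCons)
lemma ev_const: "ev z [:c:] = complex_of_real c"
  unfolding ev_def by (simp add: map_poly_pCons)
lemma ev_diff: "ev z (p - q) = ev z p - ev z q"
  using ev_add[of z "p - q" q] by simp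

definition zmat :: "complex \<Rightarrow> real^'n^'n \<Rightarrow> complex^'n^'n" where
  "zmat z A = (\<chi> i j. (if i = j then z else 0) - complex_of_real (A $ i $ j))"

lemma poly_cpoly_det: "poly (cpoly A) z = Determinants.det (zmat z A)"
proof -
  have e: "ev z (cpmat A $ i $ j) = zmat z A $ i $ j" for i j
    unfolding cpmat_def zmat_def by (auto simp: ev_diff ev_const ev_def map_poly_pCons)
  have "poly (cpoly A) z = ev z (charpoly A)" unfolding cpoly_def ev_def ..
  also have "\<dots> = Determinants.det (zmat z A)"
    unfolding charpoly_cpmat Determinants.det_def ev_sum ev_mult ev_prod ev_of_int e ..
  finally show ?thesis .
qed

lemma zmat_mult: "zmat z A *v v = z *s v - (\<chi> i j. complex_of_real (A $ i $ j)) *v v"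
proof -
  have "(zmat z A *v v) $ i = (z *s v - (\<chi> i j. complex_of_real (A $ i $ j)) *v v) $ i" for i
  proof -
    have "(zmat z A *v v) $ i = (\<Sum>j\<in>UNIV. (if i = j then z * v $ j else 0))
            - (\<Sum>j\<in>UNIV. complex_of_real (A $ i $ j) * v $ j)"
      unfolding zmat_def matrix_vector_mult_def
      by (simp add: left_diff_distrib sum_subtractf if_distrib[of "\<lambda>x. x * _"] cong: if_cong)
    thus ?thesis by (simp add: matrix_vector_mult_def)
  qed
  thus ?thesis by (simp add: Finite_Cartesian_Product.vec_eq_iff)
qed

lemma eigen_iff_root:
  fixes A :: "real^'n^'n"
  shows "(\<exists>v. v \<noteq> 0 \<and> (\<chi> i j. complex_of_real (A $ i $ j)) *v v = z *s v) \<longleftrightarrow> poly (cpoly A) z = 0"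
proof -
  have "poly (cpoly A) z \<noteq> 0 \<longleftrightarrow> (\<forall>x. zmat z A *v x = 0 \<longrightarrow> x = 0)"
    unfolding poly_cpoly_det invertible_det_nz[symmetric] invertible_left_inverse
      matrix_left_invertible_ker ..
  moreover have "zmat z A *v x = 0 \<longleftrightarrow> (\<chi> i j. complex_of_real (A $ i $ j)) *v x = z *s x" for x
    unfolding zmat_mult by (auto simp: algebra_simps)
  ultimately show ?thesis by auto
qed

lemma stable_iff_roots:
  "hurwitz_stable A \<longleftrightarrow> (\<forall>z. poly (cpoly A) z = 0 \<longrightarrow> Re z < 0)"
  unfolding hurwitz_stable_def using eigen_iff_root[of A] by blast


definition pcont :: "'b::topological_space set \<Rightarrow> ('b \<Rightarrow> real poly) \<Rightarrow> bool" where
  "pcont S F \<longleftrightarrow> (\<forall>k. continuous_on S (\<lambda>x. coeff (F x) k))"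

lemma pcont_add: "pcont S F \<Longrightarrow> pcont S G \<Longrightarrow> pcont S (\<lambda>x. F x + G x)"
  unfolding pcont_def by (auto intro!: continuous_intros)

lemma pcont_diff: "pcont S F \<Longrightarrow> pcont S G \<Longrightarrow> pcont S (\<lambda>x. F x - G x)"
  unfolding pcont_def by (auto intro!: continuous_intros)

lemma pcont_mult: "pcont S F \<Longrightarrow> pcont S G \<Longrightarrow> pcont S (\<lambda>x. F x * G x)"
  unfolding pcont_def coeff_mult by (auto intro!: continuous_intros)

lemma pcont_const: "pcont S (\<lambda>x. c)"
  unfolding pcont_def by (auto intro!: continuous_intros)

lemma pcont_sum: "(\<And>i. i \<in> I \<Longrightarrow> pcont S (F i)) \<Longrightarrow> pcont S (\<lambda>x. \<Sum>i\<in>I. F i x)"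
proof (induct I rule: infinite_finite_induct)
  case (insert a I) thus ?case by (auto intro!: pcont_add)
qed (auto intro: pcont_const)

lemma pcont_prod: "(\<And>i. i \<in> I \<Longrightarrow> pcont S (F i)) \<Longrightarrow> pcont S (\<lambda>x. \<Prod>i\<in>I. F i x)"
proof (induct I rule: infinite_finite_induct)
  case (insert a I) thus ?case by (auto intro!: pcont_mult)
qed (auto intro: pcont_const)

lemma pcont_cpmat: "pcont S (\<lambda>A::real^'n^'n. cpmat A $ i $ j)"
proof -
  have "pcont S (\<lambda>A::real^'n^'n. [:A $ i $ j:])"
    unfolding pcont_def
  proof
    fix k show "continuous_on S (\<lambda>x::real^'n^'n. coeff [:x$i$j:] k)"
      by (cases k) (auto intro!: continuous_intros)
  qed
  hence "pcont S (\<lambda>A::real^'n^'n. (if i = j then [:0,1:] else 0) - [:A $ i $ j:])"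
    by (rule pcont_diff[OF pcont_const])
  moreover have "(\<lambda>A::real^'n^'n. cpmat A $ i $ j) = (\<lambda>A. (if i = j then [:0,1:] else 0) - [:A $ i $ j:])"
    by (simp add: cpmat_def fun_eq_iff)
  ultimately show ?thesis by simp
qed

lemma pcont_charpoly: "pcont S (\<lambda>A::real^'n^'n. charpoly A)"
  unfolding charpoly_cpmat Determinants.det_def
  by (intro pcont_sum pcont_mult pcont_const pcont_prod pcont_cpmat)

lemma cont_coeff_charpoly: "continuous_on S (\<lambda>A::real^'n^'n. coeff (charpoly A) k)"
  using pcont_charpoly unfolding pcont_def by blast

lemma continuous_on_if_const: "continuous_on S f \<Longrightarrow> continuous_on S g \<Longrightarrow>
  continuous_on S (\<lambda>x. if c then f x else g x)"
  by (cases c) auto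

lemma cont_hurwitz_minor:
  "continuous_on S (\<lambda>A::real^'n^'n. hurwitz_minor n (charpoly A) m)"
  unfolding hurwitz_minor_def hurwitz_entry_def hcoef_def
  by (intro continuous_intros continuous_on_if_const cont_coeff_charpoly)

lemma poly_sum_N: fixes p :: "'a::{comm_semiring_0,semiring_1} poly"
  shows "degree p \<le> N \<Longrightarrow> poly p x = (\<Sum>i\<le>N. coeff p i * x ^ i)"
  apply (subst poly_altdef)
  by (rule sum.mono_neutral_left) (auto simp: coeff_eq_0)

lemma poly_cpoly_sum: "poly (cpoly (A::real^'n^'n)) z =
   (\<Sum>i\<le>CARD('n). complex_of_real (coeff (charpoly A) i) * z ^ i)"
proof -
  have "degree (cpoly A) \<le> CARD('n)" unfolding cpoly_def
    using degree_charpoly[of A] by (simp add: degree_map_poly)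
  hence "poly (cpoly A) z = (\<Sum>i\<le>CARD('n). coeff (cpoly A) i * z ^ i)" by (rule poly_sum_N)
  thus ?thesis unfolding cpoly_def by (simp add: coeff_map_poly)
qed

lemma cont_poly_cpoly: "continuous_on S (\<lambda>A::real^'n^'n. poly (cpoly A) z)"
  unfolding poly_cpoly_sum
  by (intro continuous_intros continuous_on_of_real cont_coeff_charpoly)


lemma small_value_near_root:
  fixes P :: "complex poly"
  assumes lc: "lead_coeff P = 1" and e: "e > 0" and small: "norm (poly P z) < e ^ degree P"
  shows "\<exists>x. poly P x = 0 \<and> norm (z - x) < e"
proof (rule ccontr)
  assume nx: "\<not> ?thesis"
  obtain r where r: "Polynomial.smult (lead_coeff P) (\<Prod>i<degree P. [:-r i, 1:]) = P"
    using complex_poly_decompose' by blast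
  hence Pr: "P = (\<Prod>i<degree P. [:-r i, 1:])" using lc by simp
  have root: "poly P (r i) = 0" if "i < degree P" for i
  proof -
    have "poly P (r i) = (\<Prod>j<degree P. r i - r j)" by (subst Pr) (simp add: poly_prod)
    also have "\<dots> = 0" using that by (intro prod_zero) auto
    finally show ?thesis .
  qed
  have far: "norm (z - r i) \<ge> e" if "i < degree P" for i
    using nx root[OF that] by (auto simp: not_less)
  have "norm (poly P z) = (\<Prod>i<degree P. norm (z - r i))"
    by (subst Pr) (simp add: poly_prod prod_norm)
  also have "\<dots> \<ge> (\<Prod>i<degree P. e)"
    by (rule prod_mono) (use e far in auto)
  finally show False using small by simp
qed

lemma cauchy_bound:
  fixes P :: "complex poly"
  assumes c: "coeff P d = 1" and dg: "degree P = d" and w: "poly P w = 0"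
  shows "norm w \<le> max 1 (\<Sum>k<d. norm (coeff P k))"
proof (rule ccontr)
  let ?B = "\<Sum>k<d. norm (coeff P k)"
  assume "\<not> ?thesis"
  hence w1: "norm w > 1" and wB: "norm w > ?B" by auto
  have "0 = poly P w" using w by simp
  also have "\<dots> = (\<Sum>k\<le>d. coeff P k * w ^ k)" using dg by (simp add: poly_sum_N)
  also have "\<dots> = (\<Sum>k<d. coeff P k * w ^ k) + w ^ d" using c by (simp add: lessThan_Suc_atMost[symmetric])
  finally have eq: "w ^ d = - (\<Sum>k<d. coeff P k * w ^ k)" by (simp add: eq_neg_iff_add_eq_0 add.commute)
  have d0: "d > 0" using eq by (cases d) auto
  have "norm w ^ d = norm (w ^ d)" by (simp add: norm_power)
  also have "\<dots> = norm (\<Sum>k<d. coeff P k * w ^ k)" unfolding eq norm_minus_cancel ..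
  also have "\<dots> \<le> (\<Sum>k<d. norm (coeff P k) * norm w ^ k)"
    by (rule order_trans[OF norm_sum]) (simp add: norm_mult norm_power)
  also have "\<dots> \<le> (\<Sum>k<d. norm (coeff P k) * norm w ^ (d - 1))"
    by (rule sum_mono, rule mult_left_mono, rule power_increasing) (use w1 in auto)
  also have "\<dots> = ?B * norm w ^ (d - 1)" by (simp add: sum_distrib_right)
  also have "\<dots> < norm w * norm w ^ (d - 1)"
    by (rule mult_strict_right_mono) (use wB w1 in \<open>auto intro!: zero_less_power\<close>)
  also have "\<dots> = norm w ^ d" using d0 by (simp add: power_eq_if)
  finally show False by simp
qed

lemma finite_neg_margin:
  fixes F :: "complex set"
  assumes "finite F" "\<forall>x\<in>F. Re x < 0"
  shows "\<exists>c>0. \<forall>x\<in>F. Re x < - c"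
  using assms
proof (induct F rule: finite_induct)
  case empty thus ?case by (auto intro: exI[of _ 1])
next
  case (insert a F)
  then obtain c where c: "c > 0" "\<forall>x\<in>F. Re x < - c" by auto
  have a: "Re a < 0" using insert by auto
  show ?case
    by (rule exI[of _ "min c (- Re a / 2)"]) (use c a in auto)
qed

lemma poly_diff_bound:
  fixes P Q :: "complex poly"
  assumes "degree P \<le> d" "degree Q \<le> d" "\<forall>k\<le>d. norm (coeff P k - coeff Q k) \<le> h"
  shows "norm (poly P z - poly Q z) \<le> h * (\<Sum>k\<le>d. norm z ^ k)"
proof -
  have "poly P z - poly Q z = (\<Sum>k\<le>d. (coeff P k - coeff Q k) * z ^ k)"
    using assms by (simp add: poly_sum_N[of P d] poly_sum_N[of Q d] sum_subtractf left_diff_distrib)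
  hence "norm (poly P z - poly Q z) \<le> (\<Sum>k\<le>d. norm (coeff P k - coeff Q k) * norm z ^ k)"
    by (simp add: order_trans[OF norm_sum] norm_mult norm_power)
  also have "\<dots> \<le> (\<Sum>k\<le>d. h * norm z ^ k)"
    by (rule sum_mono, rule mult_right_mono) (use assms(3) in auto)
  finally show ?thesis by (simp add: sum_distrib_left)
qed

lemma cpoly_coeff_n: "coeff (cpoly (A::real^'n^'n)) CARD('n) = 1"
  unfolding cpoly_def by (simp add: coeff_map_poly charpoly_coeff_n)

lemma degree_cpoly: "degree (cpoly (A::real^'n^'n)) = CARD('n)"
proof -
  have "degree (cpoly A) \<ge> CARD('n)" using cpoly_coeff_n[of A] by (intro le_degree) simp
  moreover have "degree (cpoly A) \<le> CARD('n)" unfolding cpoly_def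
    using degree_charpoly[of A] by (simp add: degree_map_poly)
  ultimately show ?thesis by simp
qed

lemma lead_cpoly: "lead_coeff (cpoly (A::real^'n^'n)) = 1"
  using cpoly_coeff_n[of A] degree_cpoly[of A] by simp

lemma cpoly_nonzero: "cpoly (A::real^'n^'n) \<noteq> 0"
  using lead_cpoly[of A] by auto

lemma eventually_close:
  fixes A0 :: "real^'n^'n"
  assumes "h > 0"
  shows "eventually (\<lambda>A. \<forall>k\<in>{..N}. norm (coeff (cpoly A) k - coeff (cpoly A0) k) < h) (at A0)"
proof (rule eventually_ball_finite[OF finite_atMost], intro ballI)
  fix k
  have "((\<lambda>A. coeff (charpoly A) k) \<longlongrightarrow> coeff (charpoly A0) k) (at A0)"
    using cont_coeff_charpoly[of UNIV k] by (auto simp: continuous_on_def)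
  from tendstoD[OF this assms]
  show "eventually (\<lambda>A. norm (coeff (cpoly A) k - coeff (cpoly A0) k) < h) (at A0)"
    by (rule eventually_mono)
       (simp add: cpoly_def coeff_map_poly dist_real_def flip: of_real_diff)
qed

lemma open_if_eventually:
  fixes S :: "'a::topological_space set"
  assumes "\<And>x. x \<in> S \<Longrightarrow> eventually (\<lambda>y. y \<in> S) (at x)"
  shows "open S"
proof (subst open_subopen, intro ballI)
  fix x assume x: "x \<in> S"
  from assms[OF x] obtain T where T: "open T" "x \<in> T" "\<forall>y\<in>T. y \<noteq> x \<longrightarrow> y \<in> S"
    unfolding eventually_at_topological by auto
  show "\<exists>T. open T \<and> x \<in> T \<and> T \<subseteq> S"
    by (rule exI[of _ T]) (use T x in auto)
qed

lemma open_stable: "open {A::real^'n^'n. hurwitz_stable A}"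
proof (rule open_if_eventually)
  fix A0 :: "real^'n^'n"
  assume "A0 \<in> {A. hurwitz_stable A}"
  hence st: "\<forall>z. poly (cpoly A0) z = 0 \<longrightarrow> Re z < 0" by (simp add: stable_iff_roots)
  let ?n = "CARD('n)"
  let ?Q = "cpoly A0"
  have fin: "finite {z. poly ?Q z = 0}" by (rule poly_roots_finite[OF cpoly_nonzero])
  obtain c where c: "c > 0" "\<forall>x\<in>{z. poly ?Q z = 0}. Re x < - c"
    using finite_neg_margin[OF fin] st by auto
  define B0 where "B0 = (\<Sum>k<?n. norm (coeff ?Q k))"
  define R where "R = max 1 (B0 + real ?n)"
  define S where "S = (\<Sum>k\<le>?n. R ^ k)"
  have S0: "S \<ge> 0" unfolding S_def R_def by (auto intro!: sum_nonneg)
  define h where "h = min 1 (c ^ ?n / (S + 1))"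
  have h0: "h > 0" unfolding h_def using c S0 by auto
  show "eventually (\<lambda>A. A \<in> {A. hurwitz_stable A}) (at A0)"
    using eventually_close[OF h0, of ?n A0]
  proof (rule eventually_mono)
    fix A :: "real^'n^'n"
    assume cl: "\<forall>k\<in>{..?n}. norm (coeff (cpoly A) k - coeff ?Q k) < h"
    let ?P = "cpoly A"
    have "Re w < 0" if w: "poly ?P w = 0" for w
    proof (rule ccontr)
      assume "\<not> Re w < 0"
      hence rw: "Re w \<ge> 0" by simp
      have "norm w \<le> max 1 (\<Sum>k<?n. norm (coeff ?P k))"
        by (rule cauchy_bound[OF cpoly_coeff_n degree_cpoly w])
      also have "(\<Sum>k<?n. norm (coeff ?P k)) \<le> (\<Sum>k<?n. norm (coeff ?Q k) + 1)"
      proof (rule sum_mono)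
        fix k assume "k \<in> {..<?n}"
        hence "k \<in> {..?n}" by simp
        hence "norm (coeff ?P k - coeff ?Q k) < h" using cl by blast
        moreover have "norm (coeff ?P k) \<le> norm (coeff ?P k - coeff ?Q k) + norm (coeff ?Q k)"
          by (rule order_trans[OF _ norm_triangle_ineq]) simp
        moreover have "h \<le> 1" unfolding h_def by simp
        ultimately show "norm (coeff ?P k) \<le> norm (coeff ?Q k) + 1" by linarith
      qed
      also have "\<dots> = B0 + real ?n" unfolding B0_def by (simp add: sum.distrib)
      finally have wR: "norm w \<le> R" unfolding R_def by (simp add: max_def split: if_splits)
      have "norm (poly ?Q w) = norm (poly ?Q w - poly ?P w)" using w by simp
      also have "\<dots> \<le> h * (\<Sum>k\<le>?n. norm w ^ k)"
        by (rule poly_diff_bound) (use cl in \<open>auto simp: degree_cpoly norm_minus_commute less_imp_le\<close>)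
      also have "\<dots> \<le> h * S" unfolding S_def
        by (rule mult_left_mono, rule sum_mono, rule power_mono) (use wR h0 in auto)
      also have "\<dots> < c ^ ?n"
      proof -
        have "h * S \<le> c ^ ?n / (S + 1) * S" unfolding h_def using S0 by (intro mult_right_mono) auto
        also have "\<dots> < c ^ ?n" using S0 c by (simp add: field_simps)
        finally show ?thesis .
      qed
      finally have "norm (poly ?Q w) < c ^ degree ?Q" by (simp add: degree_cpoly)
      then obtain x where x: "poly ?Q x = 0" "norm (w - x) < c"
        using small_value_near_root[OF lead_cpoly c(1)] by blast
      have "Re x < - c" using c(2) x(1) by auto
      moreover have "Re w - Re x \<le> norm (w - x)" using complex_Re_le_cmod[of "w - x"] by simp
      ultimately show False using rw x(2) by linarith
    qed
    thus "A \<in> {A. hurwitz_stable A}" by (simp add: stable_iff_roots)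
  qed
qed

lemma open_unstable: "open {A::real^'n^'n. \<exists>z. poly (cpoly A) z = 0 \<and> Re z > 0}"
proof (rule open_if_eventually)
  fix A0 :: "real^'n^'n"
  assume "A0 \<in> {A. \<exists>z. poly (cpoly A) z = 0 \<and> Re z > 0}"
  then obtain z where z: "poly (cpoly A0) z = 0" "Re z > 0" by auto
  let ?n = "CARD('n)"
  define S where "S = (\<Sum>k\<le>?n. norm z ^ k)"
  have S0: "S \<ge> 0" unfolding S_def by (auto intro!: sum_nonneg)
  define h where "h = Re z ^ ?n / (S + 1)"
  have h0: "h > 0" unfolding h_def using z S0 by auto
  show "eventually (\<lambda>A. A \<in> {A. \<exists>z. poly (cpoly A) z = 0 \<and> Re z > 0}) (at A0)"
    using eventually_close[OF h0, of ?n A0]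
  proof (rule eventually_mono)
    fix A :: "real^'n^'n"
    assume cl: "\<forall>k\<in>{..?n}. norm (coeff (cpoly A) k - coeff (cpoly A0) k) < h"
    have "norm (poly (cpoly A) z) = norm (poly (cpoly A) z - poly (cpoly A0) z)" using z by simp
    also have "\<dots> \<le> h * S" unfolding S_def
      by (rule poly_diff_bound) (use cl in \<open>auto simp: degree_cpoly less_imp_le\<close>)
    also have "\<dots> < Re z ^ ?n"
    proof -
      have "h * S = Re z ^ ?n / (S + 1) * S" unfolding h_def ..
      also have "\<dots> < Re z ^ ?n" using S0 z by (simp add: field_simps)
      finally show ?thesis .
    qed
    finally have "norm (poly (cpoly A) z) < Re z ^ degree (cpoly A)" by (simp add: degree_cpoly)
    then obtain x where x: "poly (cpoly A) x = 0" "norm (z - x) < Re z"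
      using small_value_near_root[OF lead_cpoly z(2)] by blast
    have "Re z - Re x \<le> norm (z - x)" using complex_Re_le_cmod[of "z - x"] by simp
    hence "Re x > 0" using x(2) by linarith
    thus "A \<in> {A. \<exists>z. poly (cpoly A) z = 0 \<and> Re z > 0}" using x(1) by auto
  qed
qed


lemma entry_bounds:
  fixes p :: "real poly"
  assumes p: "coeff p n = 1" "degree p \<le> n" and x: "0 < x" "x \<le> 1" and B: "B \<ge> 1"
    and lb: "\<forall>k\<le>n. x ^ (k^2) \<le> coeff p (n - k)"
    and ub: "\<forall>k\<le>n. coeff p (n - k) \<le> B * x ^ (k^2)"
  shows "0 \<le> hurwitz_entry n p i j \<and> hurwitz_entry n p i j \<le> B * x ^ nat ((2 * int j - int i)^2)"
proof (cases "int n - 2 * int j + int i < 0 \<or> int n - 2 * int j + int i > int n")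
  case True
  hence "hurwitz_entry n p i j = 0" unfolding hurwitz_entry_def hcoef_def by auto
  thus ?thesis using B x by auto
next
  case False
  define l where "l = int n - 2 * int j + int i"
  have l: "0 \<le> l" "l \<le> int n" using False l_def by auto
  define k where "k = n - nat l"
  have kn: "k \<le> n" unfolding k_def by simp
  have nk: "n - k = nat l" unfolding k_def using l by simp
  have he: "hurwitz_entry n p i j = coeff p (n - k)"
    unfolding hurwitz_entry_def l_def[symmetric] nk by (rule hcoef_nonneg[OF p l(1)])
  have kk: "nat ((2 * int j - int i)^2) = k^2"
  proof -
    have "int k = 2 * int j - int i" unfolding k_def l_def using l l_def by linarith
    hence "(2 * int j - int i)^2 = int (k^2)" by (metis of_nat_power)
    thus ?thesis by (simp only: nat_int)
  qed
  have "0 < x ^ (k^2)" using x by simp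
  thus ?thesis unfolding he kk using lb ub kn by force
qed

lemma sum_sq_perm:
  assumes s: "\<sigma> permutes {1..m::nat}"
  shows "(\<Sum>i\<in>{1..m}. (2 * int (\<sigma> i) - int i)^2)
       = (\<Sum>i\<in>{1..m}. int i ^ 2) + 2 * (\<Sum>i\<in>{1..m}. (int (\<sigma> i) - int i)^2)"
proof -
  have r: "(\<Sum>i\<in>{1..m}. int (\<sigma> i) ^ 2) = (\<Sum>i\<in>{1..m}. int i ^ 2)"
  proof -
    have "(\<Sum>i\<in>\<sigma> ` {1..m}. int i ^ 2) = (\<Sum>i\<in>{1..m}. int (\<sigma> i) ^ 2)"
      using sum.reindex[OF permutes_inj_on[OF s], of "\<lambda>i. int i ^ 2"] by (simp add: o_def)
    thus ?thesis using permutes_image[OF s] by simp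
  qed
  have "(\<Sum>i\<in>{1..m}. (2 * int (\<sigma> i) - int i)^2)
      = (\<Sum>i\<in>{1..m}. int i ^ 2 + 2 * (int (\<sigma> i) - int i)^2 + 2 * (int (\<sigma> i) ^ 2 - int i ^ 2))"
    by (rule sum.cong) (auto simp: power2_eq_square algebra_simps)
  also have "\<dots> = (\<Sum>i\<in>{1..m}. int i ^ 2) + 2 * (\<Sum>i\<in>{1..m}. (int (\<sigma> i) - int i)^2)
       + 2 * ((\<Sum>i\<in>{1..m}. int (\<sigma> i) ^ 2) - (\<Sum>i\<in>{1..m}. int i ^ 2))"
    by (simp add: sum.distrib sum_distrib_left sum_subtractf)
  finally show ?thesis using r by simp
qed

lemma hurwitz_pos_bound:
  fixes p :: "real poly"
  assumes n: "n \<ge> 2" and p: "coeff p n = 1" "degree p \<le> n" and x: "0 < x" "x \<le> 1" and B: "B \<ge> 1"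
    and lb: "\<forall>k\<le>n. x ^ (k^2) \<le> coeff p (n - k)"
    and ub: "\<forall>k\<le>n. coeff p (n - k) \<le> B * x ^ (k^2)"
    and small: "fact (n - 1) * B ^ (n - 1) * x^2 < 1"
  shows "hurwitz_minor n p (n - 1) > 0"
proof -
  let ?m = "n - 1"
  let ?I = "{1..?m}"
  let ?P = "{\<sigma>. \<sigma> permutes ?I}"
  define S2 where "S2 = (\<Sum>i\<in>?I. i^2)"
  define T where "T = (\<lambda>\<sigma>. of_int (sign \<sigma>) * (\<Prod>i\<in>?I. hurwitz_entry n p i (\<sigma> i)) :: real)"
  note eb = entry_bounds[OF p x B lb ub]
  have finP: "finite ?P" by (rule finite_permutations) simp
  have "hurwitz_minor n p ?m = sum T ?P" unfolding hurwitz_minor_def T_def ..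
  also have "\<dots> = T id + sum T (?P - {id})"
    by (rule sum.remove[OF finP]) (simp add: permutes_id)
  finally have D: "hurwitz_minor n p ?m = T id + sum T (?P - {id})" .
  have Tid: "T id \<ge> x ^ S2"
  proof -
    have "x ^ S2 = (\<Prod>i\<in>?I. x ^ (i^2))" unfolding S2_def by (rule power_sum)
    also have "\<dots> \<le> (\<Prod>i\<in>?I. hurwitz_entry n p i i)"
    proof (rule prod_mono)
      fix i assume i0: "i \<in> ?I"
      hence i: "i \<le> n" "i \<ge> 1" by auto
      have e: "int n - 2 * int i + int i = int (n - i)" using i by linarith
      have "hurwitz_entry n p i i = hcoef n p (int (n - i))" unfolding hurwitz_entry_def e ..
      also have "\<dots> = coeff p (nat (int (n - i)))" by (rule hcoef_nonneg[OF p]) simp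
      also have "\<dots> = coeff p (n - i)" by (simp only: nat_int)
      finally have he: "hurwitz_entry n p i i = coeff p (n - i)" .
      have "x ^ (i^2) \<le> coeff p (n - i)" using lb i(1) by blast
      moreover have "0 \<le> x ^ (i^2)" using x(1) by simp
      ultimately show "0 \<le> x ^ (i^2) \<and> x ^ (i^2) \<le> hurwitz_entry n p i i" unfolding he by simp
    qed
    also have "\<dots> = T id" unfolding T_def by simp
    finally show ?thesis .
  qed
  have Tother: "\<bar>T \<sigma>\<bar> \<le> B ^ ?m * x ^ (S2 + 2)" if s: "\<sigma> \<in> ?P - {id}" for \<sigma>
  proof -
    have sp: "\<sigma> permutes ?I" using s by simp
    define E where "E = (\<Sum>i\<in>?I. nat ((2 * int (\<sigma> i) - int i)^2))"
    have sg: "\<bar>real_of_int (sign \<sigma>)\<bar> = 1" by (metis abs_sign of_int_1 of_int_abs)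
    have "\<bar>T \<sigma>\<bar> = (\<Prod>i\<in>?I. \<bar>hurwitz_entry n p i (\<sigma> i)\<bar>)"
      unfolding T_def abs_mult sg abs_prod by simp
    also have "\<dots> \<le> (\<Prod>i\<in>?I. B * x ^ nat ((2 * int (\<sigma> i) - int i)^2))"
      by (rule prod_mono) (use eb in auto)
    also have "\<dots> = B ^ ?m * x ^ E" unfolding E_def by (simp add: prod.distrib power_sum)
    also have "x ^ E \<le> x ^ (S2 + 2)"
    proof (rule power_decreasing)
      have "int E = (\<Sum>i\<in>?I. (2 * int (\<sigma> i) - int i)^2)" unfolding E_def by (simp add: of_nat_sum)
      also have "\<dots> = (\<Sum>i\<in>?I. int i ^ 2) + 2 * (\<Sum>i\<in>?I. (int (\<sigma> i) - int i)^2)"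
        by (rule sum_sq_perm[OF sp])
      finally have Ee: "int E = int S2 + 2 * (\<Sum>i\<in>?I. (int (\<sigma> i) - int i)^2)"
        unfolding S2_def by (simp add: of_nat_sum)
      obtain j where j: "\<sigma> j \<noteq> j" using s by (auto simp: fun_eq_iff)
      have jI: "j \<in> ?I" using j sp by (meson permutes_not_in)
      have "(int (\<sigma> j) - int j)^2 \<le> (\<Sum>i\<in>?I. (int (\<sigma> i) - int i)^2)"
        by (rule member_le_sum) (use jI in auto)
      moreover have "(int (\<sigma> j) - int j)^2 \<ge> 1"
      proof -
        have "int (\<sigma> j) - int j \<noteq> 0" using j by simp
        hence "\<bar>int (\<sigma> j) - int j\<bar> \<ge> 1" by linarith
        hence "\<bar>int (\<sigma> j) - int j\<bar> * \<bar>int (\<sigma> j) - int j\<bar> \<ge> 1 * 1" by (intro mult_mono) auto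
        thus ?thesis by (simp add: power2_eq_square abs_mult[symmetric])
      qed
      ultimately show "S2 + 2 \<le> E" using Ee by linarith
    qed (use x in auto)
    hence "B ^ ?m * x ^ E \<le> B ^ ?m * x ^ (S2 + 2)" using B by (intro mult_left_mono) auto
    finally show ?thesis .
  qed
  have L1: "- (\<Sum>\<sigma>\<in>?P - {id}. B ^ ?m * x ^ (S2 + 2)) \<le> sum T (?P - {id})"
  proof -
    have "- sum T (?P - {id}) \<le> (\<Sum>\<sigma>\<in>?P - {id}. \<bar>T \<sigma>\<bar>)"
      by (simp add: sum_negf[symmetric] sum_mono)
    also have "\<dots> \<le> (\<Sum>\<sigma>\<in>?P - {id}. B ^ ?m * x ^ (S2 + 2))" by (rule sum_mono) (rule Tother)
    finally show ?thesis by linarith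
  qed
  have L2: "(\<Sum>\<sigma>\<in>?P - {id}. B ^ ?m * x ^ (S2 + 2)) \<le> fact ?m * (B ^ ?m * x ^ (S2 + 2))"
  proof -
    have "card (?P - {id}) \<le> card ?P" by (rule card_mono[OF finP]) auto
    also have "card ?P = fact ?m" by (rule card_permutations) auto
    finally have "real (card (?P - {id})) \<le> fact ?m" by (metis of_nat_fact of_nat_le_iff)
    moreover have "0 \<le> B ^ ?m * x ^ (S2 + 2)" using B x by auto
    ultimately show ?thesis by (simp add: mult_right_mono)
  qed
  have L3: "fact ?m * (B ^ ?m * x ^ (S2 + 2)) = fact ?m * B ^ ?m * x^2 * x ^ S2"
    unfolding power_add by (simp only: mult_ac)
  have L4: "fact ?m * B ^ ?m * x^2 * x ^ S2 < 1 * x ^ S2"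
    by (rule mult_strict_right_mono[OF small]) (use x in simp)
  show ?thesis using D Tid L1 L2 L3 L4 by linarith
qed


definition QP :: "real \<Rightarrow> nat \<Rightarrow> real poly" where
  "QP x N = (\<Prod>j<N. [:x ^ (2*j+1), 1:])"

lemma coeff_mult_lin: "coeff ((q::real poly) * [:r, 1:]) m = r * coeff q m + (if m = 0 then 0 else coeff q (m - 1))"
proof -
  have "q * [:r, 1:] = Polynomial.smult r q + pCons 0 q"
    by (rule poly_eqI) (simp add: mult_pCons_right coeff_pCons mult.left_neutral split: nat.split)
  thus ?thesis by (cases m) (auto simp: coeff_pCons)
qed

lemma QP_monic: "coeff (QP x N) N = 1 \<and> degree (QP x N) = N"
proof -
  have d: "degree (QP x N) = N" unfolding QP_def by (subst degree_prod_sum_eq) auto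
  have "lead_coeff (QP x N) = 1" unfolding QP_def by (simp add: lead_coeff_prod)
  thus ?thesis using d by simp
qed

lemma QP_bounds:
  assumes x: "0 < x" "x \<le> 1"
  shows "(\<forall>m. coeff (QP x N) m \<ge> 0) \<and>
         (\<forall>k\<le>N. x ^ (k^2) \<le> coeff (QP x N) (N - k) \<and> coeff (QP x N) (N - k) \<le> 2^N * x ^ (k^2))"
proof (induct N)
  case 0
  show ?case by (auto simp: QP_def)
next
  case (Suc N)
  let ?q = "QP x N"
  let ?r = "x ^ (2*N+1)"
  have r0: "?r > 0" using x by simp
  have Q: "QP x (Suc N) = ?q * [:?r, 1:]" unfolding QP_def by simp
  have cf: "coeff (QP x (Suc N)) m = ?r * coeff ?q m + (if m = 0 then 0 else coeff ?q (m - 1))" for m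
    unfolding Q by (rule coeff_mult_lin)
  from Suc have nn: "\<forall>m. coeff ?q m \<ge> 0" and bd: "\<forall>k\<le>N. x ^ (k^2) \<le> coeff ?q (N - k) \<and> coeff ?q (N - k) \<le> 2^N * x ^ (k^2)"
    by auto
  have dq: "degree ?q = N" using QP_monic by blast
  have nn': "\<forall>m. coeff (QP x (Suc N)) m \<ge> 0" unfolding cf using nn r0 by auto
  have bd': "x ^ (k^2) \<le> coeff (QP x (Suc N)) (Suc N - k) \<and> coeff (QP x (Suc N)) (Suc N - k) \<le> 2^(Suc N) * x ^ (k^2)"
    if k: "k \<le> Suc N" for k
  proof (cases "k = Suc N")
    case True
    have e: "coeff (QP x (Suc N)) (Suc N - k) = ?r * coeff ?q (N - N)" unfolding cf True by simp
    have b: "x ^ (N^2) \<le> coeff ?q (N - N)" "coeff ?q (N - N) \<le> 2^N * x ^ (N^2)" using bd by auto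
    have ee: "(Suc N)^2 = (2*N+1) + N^2" by (simp add: power2_eq_square)
    have xe: "?r * x ^ (N^2) = x ^ (k^2)" unfolding True ee power_add ..
    have "x ^ (k^2) \<le> ?r * coeff ?q (N - N)" using mult_left_mono[OF b(1), of ?r] r0 xe by simp
    moreover have "?r * coeff ?q (N - N) \<le> ?r * (2^N * x ^ (N^2))" using mult_left_mono[OF b(2), of ?r] r0 by simp
    moreover have "?r * (2^N * x ^ (N^2)) \<le> 2^(Suc N) * x ^ (k^2)"
    proof -
      have "?r * (2^N * x ^ (N^2)) = 2^N * (?r * x ^ (N^2))" by (simp only: mult_ac)
      also have "\<dots> = 2^N * x ^ (k^2)" by (simp only: xe)
      also have "\<dots> \<le> 2^(Suc N) * x ^ (k^2)" using x by simp
      finally show ?thesis .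
    qed
    ultimately show ?thesis unfolding e by linarith
  next
    case False
    hence kN: "k \<le> N" using k by simp
    have sk: "Suc N - k = Suc (N - k)" using kN by simp
    have e: "coeff (QP x (Suc N)) (Suc N - k) = ?r * coeff ?q (Suc (N - k)) + coeff ?q (N - k)"
      unfolding cf sk by simp
    have b: "x ^ (k^2) \<le> coeff ?q (N - k)" "coeff ?q (N - k) \<le> 2^N * x ^ (k^2)" using bd kN by auto
    have t: "?r * coeff ?q (Suc (N - k)) \<le> 2^N * x ^ (k^2)"
    proof (cases k)
      case 0
      have "coeff ?q (Suc (N - k)) = 0" using dq 0 by (intro coeff_eq_0) simp
      thus ?thesis using x by simp
    next
      case (Suc k')
      have sk': "Suc (N - k) = N - k'" using Suc kN by simp
      have b': "coeff ?q (N - k') \<le> 2^N * x ^ (k'^2)" using bd Suc kN by auto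
      have "?r * coeff ?q (Suc (N - k)) \<le> ?r * (2^N * x ^ (k'^2))"
        unfolding sk' using mult_left_mono[OF b', of ?r] r0 by simp
      also have "\<dots> = 2^N * x ^ (2*N+1 + k'^2)" by (simp add: power_add)
      also have "x ^ (2*N+1 + k'^2) \<le> x ^ (k^2)"
      proof (rule power_decreasing)
        show "k^2 \<le> 2*N+1 + k'^2" using Suc kN by (simp add: power2_eq_square)
      qed (use x in auto)
      hence "2^N * x ^ (2*N+1 + k'^2) \<le> 2^N * x ^ (k^2)" by simp
      finally show ?thesis .
    qed
    have "?r * coeff ?q (Suc (N - k)) \<ge> 0" using nn r0 by simp
    thus ?thesis unfolding e using b t by simp
  qed
  show ?case using nn' bd' by auto
qed

definition negI :: "real^'n^'n" where
  "negI = (\<chi> i j. if i = j then -1 else 0)"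

definition dmat :: "real \<Rightarrow> ('n \<Rightarrow> nat) \<Rightarrow> real^'n^'n" where
  "dmat x h = (\<chi> i j. if i = j then - (x ^ (2 * h i + 1)) else 0)"

lemma charpoly_dmat:
  assumes h: "bij_betw h (UNIV :: 'n set) {0..<CARD('n)}"
  shows "charpoly (dmat x h :: real^'n^'n) = QP x CARD('n)"
proof -
  have "charpoly (dmat x h) = (\<Prod>i\<in>UNIV. cpmat (dmat x h) $ i $ i)"
    unfolding charpoly_cpmat by (rule det_diagonal) (simp add: cpmat_def dmat_def)
  also have "\<dots> = (\<Prod>i\<in>UNIV. [:x ^ (2 * h i + 1), 1:])"
    by (rule prod.cong) (auto simp: cpmat_def dmat_def)
  also have "\<dots> = (\<Prod>j\<in>{0..<CARD('n)}. [:x ^ (2 * j + 1), 1:])"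
    by (rule prod.reindex_bij_betw[OF h])
  also have "\<dots> = QP x CARD('n)" unfolding QP_def by (simp add: atLeast0LessThan)
  finally show ?thesis .
qed

lemma dmat_stable:
  assumes x: "x > 0"
  shows "hurwitz_stable (dmat x h :: real^'n^'n)"
  unfolding stable_iff_roots
proof (intro allI impI)
  fix z assume "poly (cpoly (dmat x h :: real^'n^'n)) z = 0"
  hence "Determinants.det (zmat z (dmat x h :: real^'n^'n)) = 0" by (simp add: poly_cpoly_det)
  moreover have "Determinants.det (zmat z (dmat x h :: real^'n^'n)) =
     (\<Prod>i\<in>UNIV. z + complex_of_real (x ^ (2 * h i + 1)))"
    by (subst det_diagonal) (auto simp: zmat_def dmat_def)
  ultimately obtain i where "z + complex_of_real (x ^ (2 * h i + 1)) = 0" by auto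
  hence "z = - complex_of_real (x ^ (2 * h i + 1))" by (simp add: eq_neg_iff_add_eq_0)
  thus "Re z < 0" using x by simp
qed

lemma seg_stable:
  fixes M P :: "real^'n^'n"
  assumes M: "hurwitz_stable M" and P: "P \<in> closed_segment negI M"
  shows "hurwitz_stable P"
proof -
  obtain u where u: "0 \<le> u" "u \<le> 1" "P = (1 - u) *\<^sub>R negI + u *\<^sub>R M"
    using P by (auto simp: in_segment)
  let ?Mc = "(\<chi> i j. complex_of_real (M $ i $ j)) :: complex^'n^'n"
  let ?Pc = "(\<chi> i j. complex_of_real (P $ i $ j)) :: complex^'n^'n"
  have Pv: "?Pc *v v = complex_of_real u *s (?Mc *v v) - complex_of_real (1 - u) *s v" for v
  proof -
    have "(?Pc *v v) $ i = (complex_of_real u *s (?Mc *v v) - complex_of_real (1 - u) *s v) $ i" for i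
    proof -
      have Pij: "P $ i $ j = (if i = j then -(1-u) else 0) + u * M $ i $ j" for j
        by (simp add: u(3) negI_def)
      have "(?Pc *v v) $ i = (\<Sum>j\<in>UNIV. (if i = j then - complex_of_real (1-u) * v $ j else 0)
             + complex_of_real u * (complex_of_real (M $ i $ j) * v $ j))"
        unfolding matrix_vector_mult_def vec_lambda_beta by (intro sum.cong refl) (auto simp: Pij algebra_simps)
      also have "\<dots> = (\<Sum>j\<in>UNIV. complex_of_real u * (complex_of_real (M $ i $ j) * v $ j))
          - complex_of_real (1-u) * v $ i"
        by (simp add: sum.distrib if_distrib[of "\<lambda>x. x * _"] cong: if_cong) (simp add: algebra_simps)
      finally have "(?Pc *v v) $ i = (\<Sum>j\<in>UNIV. complex_of_real u * (complex_of_real (M $ i $ j) * v $ j))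
          - complex_of_real (1-u) * v $ i" .
      thus ?thesis by (simp add: matrix_vector_mult_def sum_distrib_left) (simp add: algebra_simps)
    qed
    thus ?thesis by (simp add: Finite_Cartesian_Product.vec_eq_iff)
  qed
  show ?thesis unfolding hurwitz_stable_def
  proof (intro allI impI, elim conjE)
    fix z :: complex and v :: "complex^'n"
    assume v0: "v \<noteq> 0" and ev: "?Pc *v v = z *s v"
    have eq: "complex_of_real u *s (?Mc *v v) = (z + complex_of_real (1 - u)) *s v"
      using ev unfolding Pv by (simp add: algebra_simps scaleR_conv_of_real vector_sadd_rdistrib)
    show "Re z < 0"
    proof (cases "u = 0")
      case True
      hence "(z + 1) *s v = 0" using eq by (simp del: vector_sadd_rdistrib)
      hence "z + 1 = 0" using v0 vector_mul_eq_0 by blast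
      hence "z = -1" by (simp add: eq_neg_iff_add_eq_0)
      thus ?thesis by simp
    next
      case False
      hence u0: "u > 0" using u by simp
      have "?Mc *v v = ((z + complex_of_real (1 - u)) / complex_of_real u) *s v"
      proof -
        have "?Mc *v v = (1 / complex_of_real u) *s (complex_of_real u *s (?Mc *v v))"
          using u0 by (simp add: vector_smult_assoc)
        also have "\<dots> = ((1 / complex_of_real u) * (z + complex_of_real (1 - u))) *s v"
          unfolding eq vector_smult_assoc ..
        also have "(1 / complex_of_real u) * (z + complex_of_real (1 - u)) = (z + complex_of_real (1 - u)) / complex_of_real u"
          by simp
        finally show ?thesis .
      qed
      hence "Re ((z + complex_of_real (1 - u)) / complex_of_real u) < 0"
        using M v0 unfolding hurwitz_stable_def by blast
      hence "(Re z + (1 - u)) / u < 0" by (simp add: Re_divide_of_real)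
      hence "Re z + (1 - u) < 0" using u0 by (simp add: divide_less_0_iff)
      thus ?thesis using u by linarith
    qed
  qed
qed

lemma sign_const:
  fixes f :: "'a::topological_space \<Rightarrow> real"
  assumes K: "connected K" and f: "continuous_on K f" and nz: "\<forall>y\<in>K. f y \<noteq> 0"
    and a: "a \<in> K" and b: "b \<in> K" and fb: "f b > 0"
  shows "f a > 0"
proof (rule ccontr)
  assume "\<not> f a > 0"
  hence fa: "f a < 0" using nz a by force
  have C: "connected (f ` K)" by (rule connected_continuous_image[OF f K])
  have "0 \<in> f ` K"
    using C[unfolded connected_iff_interval] a b fa fb by (meson imageI less_imp_le)
  thus False using nz by auto
qed


lemma stable_nonzero:
  fixes A :: "real^'n^'n"
  assumes n: "CARD('n) \<ge> 2" and st: "hurwitz_stable A"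
  shows "coeff (charpoly A) 0 \<noteq> 0 \<and> hurwitz_minor CARD('n) (charpoly A) (CARD('n) - 1) \<noteq> 0"
proof
  have r: "\<forall>z. poly (cpoly A) z = 0 \<longrightarrow> Re z < 0" using st by (simp add: stable_iff_roots)
  show "coeff (charpoly A) 0 \<noteq> 0"
  proof
    assume "coeff (charpoly A) 0 = 0"
    hence "poly (cpoly A) 0 = 0" by (simp add: poly_0_coeff_0 cpoly_def coeff_map_poly)
    thus False using r by fastforce
  qed
  show "hurwitz_minor CARD('n) (charpoly A) (CARD('n) - 1) \<noteq> 0"
  proof
    assume "hurwitz_minor CARD('n) (charpoly A) (CARD('n) - 1) = 0"
    then obtain z where "poly (cpoly A) z = 0" "poly (cpoly A) (-z) = 0"
      using hurwitz_zero_imp_pair[OF charpoly_coeff_n degree_charpoly n] unfolding cpoly_def by blast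
    hence "Re z < 0" "Re (-z) < 0" using r by blast+
    thus False by simp
  qed
qed

lemma necessity:
  fixes A :: "real^'n^'n"
  assumes n: "CARD('n) \<ge> 2" and st: "hurwitz_stable A"
  shows "coeff (charpoly A) 0 > 0 \<and> hurwitz_minor CARD('n) (charpoly A) (CARD('n) - 1) > 0"
proof -
  let ?n = "CARD('n)"
  obtain h :: "'n \<Rightarrow> nat" where h: "bij_betw h UNIV {0..<?n}"
    using ex_bij_betw_finite_nat[of "UNIV :: 'n set"] by auto
  define B :: real where "B = 2 ^ ?n"
  define F :: real where "F = fact (?n - 1) * B ^ (?n - 1)"
  have B1: "B \<ge> 1" unfolding B_def by simp
  have f1: "(1::real) \<le> fact (?n - 1)" by (rule fact_ge_1)
  have b1: "1 \<le> B ^ (?n - 1)" by (rule one_le_power[OF B1])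
  have "(1::real) * 1 \<le> fact (?n - 1) * B ^ (?n - 1)" by (rule mult_mono[OF f1 b1]) auto
  hence F1: "F \<ge> 1" unfolding F_def by simp
  define x where "x = 1 / (F + 1)"
  have x0: "x > 0" and x1: "x \<le> 1" unfolding x_def using F1 by auto
  have small: "F * x^2 < 1"
  proof -
    have "F * x^2 \<le> F * x" using x0 x1 F1 by (intro mult_left_mono) (auto simp: power2_eq_square)
    also have "F * x < 1" unfolding x_def using F1 by (simp add: field_simps)
    finally show ?thesis .
  qed
  define D where "D = (dmat x h :: real^'n^'n)"
  have cD: "charpoly D = QP x ?n" unfolding D_def by (rule charpoly_dmat[OF h])
  note qb = QP_bounds[OF x0 x1, of ?n]
  note qm = QP_monic[of x ?n]
  have DH: "hurwitz_minor ?n (charpoly D) (?n - 1) > 0"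
    unfolding cD
  proof (rule hurwitz_pos_bound[OF n _ _ x0 x1, of _ "2 ^ ?n"])
    show "coeff (QP x ?n) ?n = 1" using qm by simp
    show "degree (QP x ?n) \<le> ?n" using qm by simp
    show "1 \<le> (2::real) ^ ?n" by simp
    show "\<forall>k\<le>?n. x ^ (k^2) \<le> coeff (QP x ?n) (?n - k)" using qb by simp
    show "\<forall>k\<le>?n. coeff (QP x ?n) (?n - k) \<le> 2 ^ ?n * x ^ (k^2)" using qb by simp
    show "fact (?n - 1) * (2 ^ ?n) ^ (?n - 1) * x^2 < 1" using small unfolding F_def B_def .
  qed
  have D0: "coeff (charpoly D) 0 > 0"
  proof -
    have "x ^ (?n^2) \<le> coeff (QP x ?n) (?n - ?n)" using qb by blast
    moreover have "x ^ (?n^2) > 0" using x0 by simp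
    ultimately show ?thesis unfolding cD by simp
  qed
  have Dst: "hurwitz_stable D" unfolding D_def by (rule dmat_stable[OF x0])
  define K where "K = closed_segment negI A \<union> closed_segment negI D"
  have K: "connected K" unfolding K_def
    by (rule connected_Un) auto
  have AK: "A \<in> K" and DK: "D \<in> K" unfolding K_def by auto
  have Kst: "\<forall>y\<in>K. hurwitz_stable y" unfolding K_def using seg_stable st Dst by blast
  have "coeff (charpoly A) 0 > 0"
    by (rule sign_const[OF K cont_coeff_charpoly _ AK DK D0]) (use Kst stable_nonzero[OF n] in blast)
  moreover have "hurwitz_minor ?n (charpoly A) (?n - 1) > 0"
    by (rule sign_const[OF K cont_hurwitz_minor _ AK DK DH]) (use Kst stable_nonzero[OF n] in blast)
  ultimately show ?thesis ..
qed

theorem theorem1: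
  fixes S :: "(real^'n^'n) set"
  assumes "CARD('n) \<ge> 2"
    and "connected S"
    and "\<exists>A\<in>S. hurwitz_stable A"
  shows "(\<forall>A\<in>S. hurwitz_stable A) \<longleftrightarrow>
         (\<forall>A\<in>S. coeff (charpoly A) 0 > 0 \<and>
                 hurwitz_minor CARD('n) (charpoly A) (CARD('n) - 1) > 0)"
proof
  assume "\<forall>A\<in>S. hurwitz_stable A"
  thus "\<forall>A\<in>S. coeff (charpoly A) 0 > 0 \<and> hurwitz_minor CARD('n) (charpoly A) (CARD('n) - 1) > 0"
    using necessity[OF assms(1)] by blast
next
  assume H: "\<forall>A\<in>S. coeff (charpoly A) 0 > 0 \<and> hurwitz_minor CARD('n) (charpoly A) (CARD('n) - 1) > 0"
  let ?U = "{A::real^'n^'n. hurwitz_stable A}"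
  let ?N = "{A::real^'n^'n. \<exists>z. poly (cpoly A) z = 0 \<and> Re z > 0}"
  have disj: "?U \<inter> ?N \<inter> S = {}"
    by (auto simp: stable_iff_roots)
  have cover: "S \<subseteq> ?U \<union> ?N"
  proof
    fix A assume AS: "A \<in> S"
    show "A \<in> ?U \<union> ?N"
    proof (cases "hurwitz_stable A")
      case False
      then obtain z where z: "poly (cpoly A) z = 0" "\<not> Re z < 0" by (auto simp: stable_iff_roots)
      have "Re z > 0"
      proof (rule ccontr)
        assume "\<not> Re z > 0"
        hence re: "Re z = 0" using z(2) by simp
        show False
        proof (cases "Im z = 0")
          case True
          hence "z = 0" using re by (simp add: complex_eq_iff)
          hence "coeff (charpoly A) 0 = 0" using z(1)
            by (simp add: poly_0_coeff_0 cpoly_def coeff_map_poly)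
          thus False using H AS by auto
        next
          case False
          have zz: "z = \<i> * complex_of_real (Im z)" using re by (simp add: complex_eq_iff)
          have "hurwitz_minor CARD('n) (charpoly A) (CARD('n) - 1) = 0"
            by (rule hurwitz_zero_if_imag_root[OF charpoly_coeff_n degree_charpoly assms(1) False])
               (use z(1) zz in \<open>simp add: cpoly_def\<close>)
          thus False using H AS by auto
        qed
      qed
      thus ?thesis using z(1) by auto
    qed simp
  qed
  from connectedD[OF assms(2) open_stable open_unstable disj cover]
  have "?U \<inter> S = {} \<or> ?N \<inter> S = {}" .
  moreover have "?U \<inter> S \<noteq> {}" using assms(3) by auto
  ultimately have "?N \<inter> S = {}" by blast
  thus "\<forall>A\<in>S. hurwitz_stable A" using cover by blast
qed

end
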